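(* Let $\{\gamma_k\}$ be strictly positive numbers with $\gamma_k\to\infty$, $\{g_k\}$ probability generating functions, $G_k(z)=k\gamma_k[g_k(e^{-z/k})-e^{-z/k}]$ for $z\ge0$, and $v_k(t,\lambda)=-k\log g_k^{[\gamma_kt]}(e^{-\lambda/k})$. Suppose that for every $a\ge0$ the sequence $\{G_k\}$ is uniformly Lipschitz on $[0,a]$ and $G_k\to\phi$ uniformly on $[0,a]$ for some function $\phi$ on $[0,\infty)$. Then for every $a\ge0$, $v_k(t,\lambda)$ converges uniformly on $(t,\lambda)\in[0,a]^2$ to some limit $v_t(\lambda)$, and the limit satisfies $$v_t(\lambda)=\lambda-\int_0^t\phi(v_s(\lambda))\,\mathrm ds,\qquad\lambda,t\ge0.$$
   Context: $g_k^n$ denotes the $n$-fold iterate of $g_k$ with $g_k^0(z)=z$; $[x]$ is the integer part of $x$. *)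

theory Defs
  imports "HOL-Analysis.Analysis"
begin

definition is_pgf :: "(real \<Rightarrow> real) \<Rightarrow> bool" where
  "is_pgf g \<longleftrightarrow> (\<exists>p :: nat \<Rightarrow> real. (\<forall>n. p n \<ge> 0) \<and> p sums 1 \<and>
      (\<forall>s\<in>{0..1}. g s = (\<Sum>n. p n * s ^ n)))"

definition GG :: "(nat \<Rightarrow> real) \<Rightarrow> (nat \<Rightarrow> real \<Rightarrow> real) \<Rightarrow> nat \<Rightarrow> real \<Rightarrow> real" where
  "GG \<gamma> g k z = real k * \<gamma> k * (g k (exp (- z / real k)) - exp (- z / real k))"

definition vv :: "(nat \<Rightarrow> real) \<Rightarrow> (nat \<Rightarrow> real \<Rightarrow> real) \<Rightarrow> nat \<Rightarrow> real \<Rightarrow> real \<Rightarrow> real" where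
  "vv \<gamma> g k t l = - real k * ln ((g k ^^ nat \<lfloor>\<gamma> k * t\<rfloor>) (exp (- l / real k)))"

end

theory Submission
  imports Defs
begin


lemma pgf_sums:
  assumes "\<forall>n. p n \<ge> (0::real)" "p sums 1" "s \<in> {0..1::real}"
  shows "(\<lambda>n. p n * s ^ n) sums (\<Sum>n. p n * s ^ n)"
proof -
  have "summable (\<lambda>n. p n * s ^ n)"
  proof (rule summable_comparison_test[where g = p])
    show "\<exists>N. \<forall>n\<ge>N. norm (p n * s ^ n) \<le> p n"
      using assms by (auto intro!: exI[of _ 0] mult_left_le simp: abs_mult power_le_one)
    show "summable p" using assms(2) by (simp add: sums_iff)
  qed
  then show ?thesis by (simp add: summable_sums)
qed

lemma pgf_props:
  assumes "is_pgf g"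
  shows "g 1 = 1" and "\<And>s. s \<in> {0..1} \<Longrightarrow> g s \<le> 1"
    and "\<And>s. s \<in> {0<..1} \<Longrightarrow> g s > 0"
proof -
  obtain p where p: "\<forall>n. p n \<ge> 0" "p sums 1" "\<forall>s\<in>{0..1}. g s = (\<Sum>n. p n * s ^ n)"
    using assms unfolding is_pgf_def by blast
  show "g 1 = 1" using p sums_unique[OF p(2)] by simp
  show "g s \<le> 1" if "s \<in> {0..1}" for s
  proof -
    have "g s = (\<Sum>n. p n * s ^ n)" using p that by auto
    also have "\<dots> \<le> 1"
      by (rule sums_le[OF _ pgf_sums[OF p(1,2) that] p(2)])
         (use p that in \<open>auto intro: mult_left_le simp: power_le_one\<close>)
    finally show ?thesis .
  qed
  show "g s > 0" if "s \<in> {0<..1}" for s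
  proof -
    have "\<exists>n. p n \<noteq> 0"
    proof (rule ccontr)
      assume "\<not> ?thesis" then have "p = (\<lambda>n. 0)" by auto
      with p(2) show False using sums_unique2 sums_zero by fastforce
    qed
    then obtain n where n: "p n > 0" using p(1) by (metis less_eq_real_def)
    have ss: "(\<lambda>n. p n * s ^ n) sums (\<Sum>n. p n * s ^ n)" using pgf_sums[OF p(1,2)] that by auto
    have "p n * s ^ n \<le> (\<Sum>n. p n * s ^ n)"
      using sum_le_suminf[of "\<lambda>n. p n * s ^ n" "{n}"] ss p(1) that
      by (auto simp: sums_iff)
    moreover have "p n * s ^ n > 0" using n that by auto
    ultimately show ?thesis using p that by auto
  qed
qed

lemma pgf_chord_mono:
  assumes "is_pgf g" "0 \<le> s" "s \<le> s0" "s0 < 1"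
  shows "(1 - g s) / (1 - s) \<le> (1 - g s0) / (1 - s0)"
proof -
  obtain p where p: "\<forall>n. p n \<ge> 0" "p sums 1" "\<forall>s\<in>{0..1}. g s = (\<Sum>n. p n * s ^ n)"
    using assms unfolding is_pgf_def by blast
  have key: "(\<lambda>n. p n * ((1 - x ^ n) / (1 - x))) sums ((1 - g x) / (1 - x))"
    if "0 \<le> x" "x < 1" for x
  proof -
    have "(\<lambda>n. p n - p n * x ^ n) sums (1 - g x)"
      using sums_diff[OF p(2) pgf_sums[OF p(1,2)]] p(3) that by auto
    then have "(\<lambda>n. (p n - p n * x ^ n) / (1 - x)) sums ((1 - g x) / (1 - x))"
      by (rule sums_divide)
    then show ?thesis by (simp add: algebra_simps diff_divide_distrib)
  qed
  show ?thesis
  proof (rule sums_le[OF _ key key])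
    fix n
    have "(1 - s ^ n) / (1 - s) = (\<Sum>i<n. s ^ i)" using assms one_diff_power_eq[of s n] by auto
    also have "\<dots> \<le> (\<Sum>i<n. s0 ^ i)"
      by (rule sum_mono) (use assms in \<open>auto intro: power_mono\<close>)
    also have "\<dots> = (1 - s0 ^ n) / (1 - s0)" using assms one_diff_power_eq[of s0 n] by auto
    finally show "p n * ((1 - s ^ n) / (1 - s)) \<le> p n * ((1 - s0 ^ n) / (1 - s0))"
      using p(1) by (metis mult_left_mono times_divide_eq_right)
  qed (use assms in auto)
qed




definition stp :: "(nat \<Rightarrow> real \<Rightarrow> real) \<Rightarrow> nat \<Rightarrow> real \<Rightarrow> real" where
  "stp g k u = - real k * ln (g k (exp (- u / real k)))"

lemma iter_rel:
  assumes "is_pgf (g k)" "k \<ge> 1" "l \<ge> 0"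
  shows "(g k ^^ n) (exp (- l / real k)) = exp (- (stp g k ^^ n) l / real k) \<and> (stp g k ^^ n) l \<ge> 0"
proof (induction n)
  case 0 then show ?case using assms by simp
next
  case (Suc n)
  define u where "u = (stp g k ^^ n) l"
  have u0: "u \<ge> 0" using Suc u_def by simp
  have e: "exp (- u / real k) \<in> {0<..1}" using u0 assms by auto
  have gp: "g k (exp (- u / real k)) > 0" "g k (exp (- u / real k)) \<le> 1"
    using pgf_props(2,3)[OF assms(1)] e by auto
  have "exp (- stp g k u / real k) = g k (exp (- u / real k))"
    using gp assms by (simp add: stp_def)
  moreover have "stp g k u \<ge> 0" using gp by (simp add: stp_def ln_le_zero_iff mult_nonneg_nonpos)
  ultimately show ?case using Suc u_def by simp
qed

lemma vv_iter:
  assumes "is_pgf (g k)" "k \<ge> 1" "l \<ge> 0"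
  shows "vv \<gamma> g k t l = (stp g k ^^ nat \<lfloor>\<gamma> k * t\<rfloor>) l"
  using iter_rel[of g k l "nat \<lfloor>\<gamma> k * t\<rfloor>", OF assms] assms(2) by (simp add: vv_def)

lemma one_minus_exp_le: "1 - exp (- y) \<le> (y::real)"
  using exp_ge_add_one_self[of "-y"] by simp

lemma one_minus_exp_ge: "y \<ge> 0 \<Longrightarrow> y * exp (- y) \<le> 1 - exp (- (y::real))"
proof -
  assume "y \<ge> 0"
  have "y + 1 \<le> exp y" using exp_ge_add_one_self[of y] by linarith
  then have "(y + 1) * exp (-y) \<le> exp y * exp (-y)" by (simp add: mult_right_mono)
  then show ?thesis by (simp add: exp_minus_inverse algebra_simps)
qed

lemma GG_zero: "is_pgf (g k) \<Longrightarrow> GG \<gamma> g k 0 = 0"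
  using pgf_props(1) by (simp add: GG_def)

lemma G_lower:
  assumes pg: "is_pgf (g k)" and k: "k \<ge> 1" and gp: "\<gamma> k > 0" and L1: "L1 \<ge> 0"
    and lip: "\<forall>x\<in>{0..1}. \<forall>y\<in>{0..1}. \<bar>GG \<gamma> g k x - GG \<gamma> g k y\<bar> \<le> L1 * \<bar>x - y\<bar>"
    and z: "z \<ge> 0"
  shows "GG \<gamma> g k z \<ge> - (exp 1 * L1) * z"
proof (cases "z = 0")
  case True then show ?thesis using GG_zero[of g k \<gamma>, OF pg] by simp
next
  case False
  then have zp: "z > 0" using z by simp
  define K where "K = real k"
  have Kp: "K \<ge> 1" using k K_def by simp
  define h where "h = min z 1"
  have hp: "h > 0" "h \<le> 1" "h \<le> z" using zp by (auto simp: h_def)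
  define s where "s = exp (- z / K)"
  define s0 where "s0 = exp (- h / K)"
  have s_le: "s \<le> s0" unfolding s_def s0_def using hp Kp by (auto simp: divide_right_mono)
  have s0_lt: "s0 < 1" unfolding s0_def using hp Kp by auto
  have s_ge: "s \<ge> 0" unfolding s_def by simp
  have s_lt: "s < 1" using s_le s0_lt by simp
  have chord: "(1 - g k s) / (1 - s) \<le> (1 - g k s0) / (1 - s0)"
    by (rule pgf_chord_mono[OF pg s_ge s_le s0_lt])
  have Gh: "GG \<gamma> g k h \<ge> - L1 * h"
  proof -
    have "\<bar>GG \<gamma> g k h - GG \<gamma> g k 0\<bar> \<le> L1 * \<bar>h - 0\<bar>" using lip hp by (meson atLeastAtMost_iff less_eq_real_def order_refl zero_le_one)
    then show ?thesis using GG_zero[of g k \<gamma>, OF pg] hp by auto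
  qed
  have Gh': "GG \<gamma> g k h = K * \<gamma> k * (g k s0 - s0)" by (simp add: GG_def K_def s0_def)
  have Gz': "GG \<gamma> g k z = K * \<gamma> k * (g k s - s)" by (simp add: GG_def K_def s_def)
  have "g k s - s = (1 - s) * (1 - (1 - g k s) / (1 - s))" using s_lt by (simp add: field_simps)
  also have "\<dots> \<ge> (1 - s) * (1 - (1 - g k s0) / (1 - s0))"
    using chord s_lt by (intro mult_left_mono) auto
  also have "(1 - s) * (1 - (1 - g k s0) / (1 - s0)) = (1 - s) / (1 - s0) * (g k s0 - s0)"
    using s0_lt by (simp add: field_simps)
  finally have "g k s - s \<ge> (1 - s) / (1 - s0) * (g k s0 - s0)" .
  then have "K * \<gamma> k * ((1 - s) / (1 - s0) * (g k s0 - s0)) \<le> K * \<gamma> k * (g k s - s)"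
    using Kp gp by (intro mult_left_mono) auto
  then have "GG \<gamma> g k z \<ge> (1 - s) / (1 - s0) * GG \<gamma> g k h"
    unfolding Gz' Gh' by (simp add: mult_ac)
  moreover have "(1 - s) / (1 - s0) * GG \<gamma> g k h \<ge> (1 - s) / (1 - s0) * (- L1 * h)"
    using Gh s_lt s0_lt by (intro mult_left_mono) auto
  moreover have "(1 - s) * h / (1 - s0) \<le> exp 1 * z"
  proof -
    have a: "1 - s \<le> z / K" unfolding s_def using one_minus_exp_le[of "z/K"] by simp
    have "(h / K) * exp (- (h / K)) \<le> 1 - s0" unfolding s0_def
      using one_minus_exp_ge[of "h/K"] hp Kp by simp
    moreover have "exp (- (h / K)) \<ge> exp (-1)" using hp Kp by (simp add: divide_le_eq)
    ultimately have "(h / K) * exp (-1) \<le> 1 - s0"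
      by (smt (verit) hp Kp divide_nonneg_nonneg mult_left_mono)
    then have "(h / K) * exp (-1) * exp 1 \<le> (1 - s0) * exp 1"
      by (intro mult_right_mono) auto
    then have "h / K \<le> (1 - s0) * exp 1" by (simp add: mult.assoc flip: exp_add)
    then have "h / (1 - s0) \<le> K * exp 1" using s0_lt Kp
      by (simp add: field_simps)
    then have "(1 - s) * (h / (1 - s0)) \<le> (z / K) * (K * exp 1)"
      using a s_lt hp s0_lt Kp zp by (intro mult_mono) auto
    then show ?thesis using Kp by (simp add: mult.commute)
  qed
  ultimately have f1: "(1 - s) / (1 - s0) * GG \<gamma> g k h \<le> GG \<gamma> g k z"
    and f2: "(1 - s) / (1 - s0) * (- L1 * h) \<le> (1 - s) / (1 - s0) * GG \<gamma> g k h"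
    and f3: "(1 - s) * h / (1 - s0) \<le> exp 1 * z" by blast+
  have "- (exp 1 * L1) * z = - (L1 * (exp 1 * z))" by simp
  also have "\<dots> \<le> - (L1 * ((1 - s) * h / (1 - s0)))"
    using mult_left_mono[OF f3 L1] by simp
  also have "\<dots> = (1 - s) / (1 - s0) * (- L1 * h)" by simp
  also have "\<dots> \<le> GG \<gamma> g k z" using f1 f2 by linarith
  finally show ?thesis .
qed




lemma abs_tri2: "\<bar>- a - b\<bar> \<le> \<bar>a\<bar> + \<bar>b::real\<bar>"
  by (simp add: abs_if)

lemma step_est:
  assumes pg: "is_pgf (g k)" and k: "k \<ge> 1" and gp: "\<gamma> k > 0" and LB: "LB \<ge> 0" and c: "c \<ge> 0"
    and lipB: "\<forall>x\<in>{0..B}. \<bar>GG \<gamma> g k x\<bar> \<le> LB * x"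
    and low: "\<forall>z\<ge>0. GG \<gamma> g k z \<ge> - c * z"
    and kB: "B \<le> real k"
    and small: "exp 1 * LB * B / (real k * \<gamma> k) \<le> 1/2"
    and u: "0 \<le> u" "u \<le> B"
  shows "\<bar>stp g k u - u + GG \<gamma> g k u / \<gamma> k\<bar>
           \<le> 2 * (exp 1 * LB * B)^2 / (real k * \<gamma> k ^ 2) + LB * B * (exp (B / real k) - 1) / \<gamma> k"
    and "stp g k u \<le> u + 2 * exp 1 * c * u / \<gamma> k"
proof -
  define K where "K = real k"
  have Kp: "K \<ge> 1" using k K_def by simp
  define G where "G = GG \<gamma> g k u"
  define E where "E = exp (u / K)"
  define s where "s = exp (- u / K)"
  define x where "x = E * G / (K * \<gamma> k)"
  have sE: "s * E = 1" by (simp add: s_def E_def flip: exp_add)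
  have sp: "s > 0" by (simp add: s_def)
  have E1: "E \<ge> 1" using u Kp by (simp add: E_def)
  have Ee: "E \<le> exp 1" using u kB Kp K_def by (simp add: E_def divide_le_eq)
  have EB: "E \<le> exp (B / K)" using u Kp by (simp add: E_def divide_right_mono)
  have gs: "g k s = s + G / (K * \<gamma> k)" using gp Kp by (simp add: G_def GG_def K_def s_def)
  have gs2: "g k s = s * (1 + x)" unfolding gs x_def using sE
    by (simp add: algebra_simps)
  have gpos: "g k s > 0" using pgf_props(3)[OF pg] sp u Kp by (auto simp: s_def)
  have x1: "1 + x > 0" using gpos gs2 sp by (simp add: zero_less_mult_iff)
  have stpx: "stp g k u = u - K * ln (1 + x)"
  proof -
    have "ln (g k s) = ln s + ln (1 + x)" using gs2 sp x1 by (simp add: ln_mult)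
    moreover have "ln s = - u / K" by (simp add: s_def)
    moreover have "stp g k u = - K * ln (g k s)" by (simp add: stp_def K_def s_def)
    moreover have "stp g k u = - K * ln (g k s)" by (simp add: stp_def K_def s_def)
    ultimately have "ln (1 + x) = u / K + ln (g k s)" by simp
    then have "K * ln (1 + x) = K * (u / K) + K * ln (g k s)" by (simp add: distrib_left)
    then have "K * ln (1 + x) = u + K * ln (g k s)" using Kp by simp
    then show ?thesis using \<open>stp g k u = - K * ln (g k s)\<close> by simp
  qed
  have Gb: "\<bar>G\<bar> \<le> LB * B"
  proof -
    have "\<bar>G\<bar> \<le> LB * u" using lipB u G_def by auto
    also have "LB * u \<le> LB * B" using u LB by (simp add: mult_left_mono)
    finally show ?thesis .
  qed
  have xb: "\<bar>x\<bar> \<le> exp 1 * LB * B / (K * \<gamma> k)"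
  proof -
    have "\<bar>x\<bar> = E * \<bar>G\<bar> / (K * \<gamma> k)" using E1 gp Kp by (simp add: x_def abs_mult)
    also have "\<dots> \<le> exp 1 * (LB * B) / (K * \<gamma> k)"
      using Ee Gb E1 gp Kp by (intro divide_right_mono mult_mono) auto
    finally show ?thesis by simp
  qed
  have xh: "\<bar>x\<bar> \<le> 1/2" using xb small unfolding K_def by linarith
  have lnb: "\<bar>ln (1 + x) - x\<bar> \<le> 2 * x^2" by (rule abs_ln_one_plus_x_minus_x_bound[OF xh])
  have Kx: "K * x = E * G / \<gamma> k" using Kp by (simp add: x_def)
  show "\<bar>stp g k u - u + GG \<gamma> g k u / \<gamma> k\<bar>
           \<le> 2 * (exp 1 * LB * B)^2 / (real k * \<gamma> k ^ 2) + LB * B * (exp (B / real k) - 1) / \<gamma> k"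
  proof -
    have eq: "stp g k u - u + GG \<gamma> g k u / \<gamma> k = - (K * (ln (1 + x) - x)) - (E - 1) * G / \<gamma> k"
      using stpx Kx by (simp add: G_def algebra_simps diff_divide_distrib)
    have t1: "\<bar>K * (ln (1 + x) - x)\<bar> \<le> 2 * (exp 1 * LB * B)^2 / (K * \<gamma> k ^ 2)"
    proof -
      have "\<bar>K * (ln (1 + x) - x)\<bar> \<le> K * (2 * x^2)" using lnb Kp by (simp add: abs_mult)
      also have "x^2 \<le> (exp 1 * LB * B / (K * \<gamma> k))^2"
        using xb by (metis abs_le_square_iff abs_of_nonneg abs_ge_zero order_trans power2_abs)
      then have "K * (2 * x^2) \<le> K * (2 * (exp 1 * LB * B / (K * \<gamma> k))^2)" using Kp by simp
      also have "\<dots> = 2 * (exp 1 * LB * B)^2 / (K * \<gamma> k ^ 2)" using Kp gp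
        by (simp add: power2_eq_square field_simps)
      finally show ?thesis .
    qed
    have t2: "\<bar>(E - 1) * G / \<gamma> k\<bar> \<le> LB * B * (exp (B / K) - 1) / \<gamma> k"
    proof -
      have "\<bar>(E - 1) * G\<bar> \<le> (exp (B / K) - 1) * (LB * B)"
        using E1 EB Gb u Kp by (simp add: abs_mult) (intro mult_mono, auto)
      then show ?thesis using gp by (simp add: divide_right_mono mult.commute)
    qed
    have "\<bar>- (K * (ln (1 + x) - x)) - (E - 1) * G / \<gamma> k\<bar> \<le> \<bar>K * (ln (1 + x) - x)\<bar> + \<bar>(E - 1) * G / \<gamma> k\<bar>"
      by (rule abs_tri2)
    then show ?thesis unfolding eq K_def[symmetric] using t1 t2 by linarith
  qed
  show "stp g k u \<le> u + 2 * exp 1 * c * u / \<gamma> k"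
  proof (cases "G \<ge> 0")
    case True
    then have "x \<ge> 0" using E1 gp Kp by (simp add: x_def)
    then have "ln (1 + x) \<ge> 0" by simp
    then have "stp g k u \<le> u" using stpx Kp by simp
    moreover have "2 * exp 1 * c * u / \<gamma> k \<ge> 0" using c u gp by simp
    ultimately show ?thesis by linarith
  next
    case False
    have Gc: "- G \<le> c * u" using low u G_def by auto
    have A1: "stp g k u \<le> u - K * x + K * (2 * x^2)"
    proof -
      have "ln (1 + x) \<ge> x - 2 * x^2" using lnb by (simp add: abs_le_iff)
      then have "K * ln (1 + x) \<ge> K * (x - 2 * x^2)" using Kp by (simp add: mult_left_mono)
      then show ?thesis using stpx by (simp add: right_diff_distrib)
    qed
    have A2: "K * (2 * x^2) \<le> K * \<bar>x\<bar>"
    proof -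
      have "2 * x^2 = 2 * \<bar>x\<bar> * \<bar>x\<bar>" by (simp add: power2_eq_square abs_mult_self_eq)
      also have "\<dots> \<le> 1 * \<bar>x\<bar>" using xh by (intro mult_right_mono) auto
      finally show ?thesis using Kp by simp
    qed
    have A3: "K * \<bar>x\<bar> = - (K * x)"
    proof -
      have "E * G < 0" using False E1 by (simp add: mult_pos_neg)
      then have "x < 0" unfolding x_def using gp Kp by (simp add: divide_neg_pos)
      then show ?thesis by simp
    qed
    have A: "stp g k u \<le> u - K * x + - (K * x)" using A1 A2 A3 by linarith
    have "- (K * x) = E * (- G) / \<gamma> k" using Kx by simp
    also have "E * (- G) / \<gamma> k \<le> exp 1 * (c * u) / \<gamma> k"
      using Ee Gc False E1 gp by (intro divide_right_mono mult_mono) auto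
    finally have B: "- (K * x) \<le> exp 1 * (c * u) / \<gamma> k" .
    have C: "2 * exp 1 * c * u / \<gamma> k = 2 * (exp 1 * (c * u) / \<gamma> k)" by simp
    show ?thesis using A B C by linarith
  qed
qed




lemma floor_nat_eq:
  assumes "c > 0" "real m \<le> c * s" "c * s < real m + 1"
  shows "nat \<lfloor>c * s\<rfloor> = m"
proof -
  have "\<lfloor>c * s\<rfloor> = int m" using assms by (simp add: floor_eq_iff)
  then show ?thesis by simp
qed

lemma step_integral_grid:
  assumes c: "c > (0::real)"
  shows "((\<lambda>s. H (nat \<lfloor>c * s\<rfloor>)) has_integral ((\<Sum>j<m. H j) / c)) {0..real m / c}"
proof (induction m)
  case 0 then show ?case by (simp add: has_integral_refl)
next
  case (Suc m)
  have piece: "((\<lambda>s. H (nat \<lfloor>c * s\<rfloor>)) has_integral (H m / c)) {real m / c..real (Suc m) / c}"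
  proof (rule has_integral_spike_finite[where S = "{real (Suc m) / c}" and f = "\<lambda>s. H m"])
    show "finite {real (Suc m) / c}" by simp
    fix s assume s: "s \<in> {real m / c..real (Suc m) / c} - {real (Suc m) / c}"
    then have "real m \<le> c * s" "c * s < real m + 1" using c
      by (auto simp: field_simps)
    then show "H (nat \<lfloor>c * s\<rfloor>) = H m" using floor_nat_eq[OF c] by simp
  next
    have "((\<lambda>s. H m) has_integral (Henstock_Kurzweil_Integration.content {real m / c..real (Suc m) / c} *\<^sub>R H m)) {real m / c..real (Suc m) / c}"
      by (rule has_integral_const_real)
    moreover have "Henstock_Kurzweil_Integration.content {real m / c..real (Suc m) / c} = 1 / c" using c
      by (simp add: divide_right_mono field_simps)
    ultimately show "((\<lambda>s. H m) has_integral (H m / c)) {real m / c..real (Suc m) / c}" by simp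
  qed
  have "((\<lambda>s. H (nat \<lfloor>c * s\<rfloor>)) has_integral ((\<Sum>j<m. H j) / c + H m / c)) {0..real (Suc m) / c}"
    by (rule has_integral_combine[OF _ _ Suc piece]) (use c in \<open>auto simp: divide_right_mono\<close>)
  then show ?case by (simp add: add_divide_distrib)
qed

lemma step_integral:
  assumes c: "c > (0::real)" and t: "t \<ge> 0"
  shows "((\<lambda>s. H (nat \<lfloor>c * s\<rfloor>)) has_integral
          ((\<Sum>j<nat \<lfloor>c * t\<rfloor>. H j) / c + (t - real (nat \<lfloor>c * t\<rfloor>) / c) * H (nat \<lfloor>c * t\<rfloor>))) {0..t}"
proof -
  define n where "n = nat \<lfloor>c * t\<rfloor>"
  have fl: "\<lfloor>c * t\<rfloor> \<ge> 0" using c t by simp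
  have n1: "real n \<le> c * t" using fl by (simp add: n_def)
  have n2: "c * t < real n + 1" using fl by (simp add: n_def)
  have nt: "real n / c \<le> t" using n1 c by (simp add: divide_le_eq mult.commute)
  have piece: "((\<lambda>s. H (nat \<lfloor>c * s\<rfloor>)) has_integral ((t - real n / c) * H n)) {real n / c..t}"
  proof (rule has_integral_spike_finite[where S = "{}" and f = "\<lambda>s. H n"])
    fix s assume s: "s \<in> {real n / c..t} - {}"
    then have "real n \<le> c * s" using c by (auto simp: field_simps)
    moreover have "c * s < real n + 1" using s n2 c by (smt (verit) DiffD1 atLeastAtMost_iff mult_left_mono)
    ultimately show "H (nat \<lfloor>c * s\<rfloor>) = H n" using floor_nat_eq[OF c] by simp
  next
    have "((\<lambda>s. H n) has_integral (Henstock_Kurzweil_Integration.content {real n / c..t} *\<^sub>R H n)) {real n / c..t}"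
      by (rule has_integral_const_real)
    then show "((\<lambda>s. H n) has_integral ((t - real n / c) * H n)) {real n / c..t}"
      using nt by simp
  qed auto
  have "((\<lambda>s. H (nat \<lfloor>c * s\<rfloor>)) has_integral ((\<Sum>j<n. H j) / c + (t - real n / c) * H n)) {0..t}"
    by (rule has_integral_combine[OF _ nt step_integral_grid[OF c] piece]) (use c in simp)
  then show ?thesis by (simp add: n_def)
qed

lemma gronwall:
  fixes f :: "real \<Rightarrow> real"
  assumes a: "a \<ge> 0" and L: "L \<ge> 0" and d: "\<delta> \<ge> 0"
    and int: "\<And>t. t \<in> {0..a} \<Longrightarrow> f integrable_on {0..t}"
    and bnd: "\<And>s. s \<in> {0..a} \<Longrightarrow> 0 \<le> f s \<and> f s \<le> M"
    and ineq: "\<And>t. t \<in> {0..a} \<Longrightarrow> f t \<le> \<delta> + L * integral {0..t} f"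
    and t: "t \<in> {0..a}"
  shows "f t \<le> \<delta> * exp (L * t)"
proof -
  have M: "M \<ge> 0" using bnd[of 0] a by auto
  have claim: "\<forall>t\<in>{0..a}. f t \<le> \<delta> * exp (L * t) + M * ((L * t) ^ n / fact n)" for n
  proof (induction n)
    case 0
    show ?case using bnd d by (auto intro: add_increasing)
  next
    case (Suc n)
    show ?case
    proof
      fix t assume t: "t \<in> {0..a}"
      define F where "F = (\<lambda>s. \<delta> * exp (L * s) + M * ((L * s) ^ Suc n / fact (Suc n)))"
      define b where "b = (\<lambda>s. L * (\<delta> * exp (L * s) + M * ((L * s) ^ n / fact n)))"
      have der: "(F has_vector_derivative b s) (at s within {0..t})" for s
      proof -
        have "(F has_real_derivative b s) (at s)"
          unfolding F_def b_def
          apply (rule derivative_eq_intros refl | simp)+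
          apply (simp add: algebra_simps fact_Suc power_mult_distrib)
          done
        then show ?thesis
          by (simp add: has_real_derivative_iff_has_vector_derivative has_vector_derivative_at_within)
      qed
      have bi: "(b has_integral (F t - F 0)) {0..t}"
        using fundamental_theorem_of_calculus[of 0 t F b] der t by auto
      have "L * integral {0..t} f = integral {0..t} (\<lambda>s. L * f s)" by simp
      also have "\<dots> \<le> integral {0..t} b"
      proof (rule integral_le)
        show "(\<lambda>s. L * f s) integrable_on {0..t}" using integrable_on_cmult_left[OF int[OF t], of L] by simp
        show "b integrable_on {0..t}" using bi by blast
        fix s assume s: "s \<in> {0..t}"
        then have "s \<in> {0..a}" using t by auto
        then show "L * f s \<le> b s" unfolding b_def using Suc L by (auto intro: mult_left_mono)
      qed
      also have "\<dots> = F t - F 0" using bi by (simp add: integral_unique)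
      finally have "f t \<le> \<delta> + (F t - F 0)" using ineq[OF t] by linarith
      then show "f t \<le> \<delta> * exp (L * t) + M * ((L * t) ^ Suc n / fact (Suc n))"
        by (simp add: F_def)
    qed
  qed
  have lim: "(\<lambda>n. \<delta> * exp (L * t) + M * ((L * t) ^ n / fact n)) \<longlonglongrightarrow> \<delta> * exp (L * t) + M * 0"
  proof (intro tendsto_intros)
    have "summable (\<lambda>n. inverse (fact n) * (L * t) ^ n)" by (rule summable_exp)
    then have "(\<lambda>n. inverse (fact n) * (L * t) ^ n) \<longlonglongrightarrow> 0" by (rule summable_LIMSEQ_zero)
    then show "(\<lambda>n. (L * t) ^ n / fact n) \<longlonglongrightarrow> 0" by (simp add: divide_inverse mult.commute)
  qed
  show ?thesis using LIMSEQ_le_const[OF lim] claim t by auto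
qed




locale setting =
  fixes \<gamma> :: "nat \<Rightarrow> real" and g :: "nat \<Rightarrow> real \<Rightarrow> real" and \<phi> :: "real \<Rightarrow> real"
  assumes gamma_pos: "\<And>k. \<gamma> k > 0"
    and gamma_lim: "filterlim \<gamma> at_top sequentially"
    and pgf: "\<And>k. is_pgf (g k)"
    and lip: "\<And>a. a \<ge> 0 \<Longrightarrow> \<exists>L. \<forall>k\<ge>1. \<forall>x\<in>{0..a}. \<forall>y\<in>{0..a}.
                 \<bar>GG \<gamma> g k x - GG \<gamma> g k y\<bar> \<le> L * \<bar>x - y\<bar>"
    and conv: "\<And>a. a \<ge> 0 \<Longrightarrow> uniform_limit {0..a} (GG \<gamma> g) \<phi> sequentially"
begin

definition "Lc a = max 0 (SOME L. \<forall>k\<ge>1. \<forall>x\<in>{0..a}. \<forall>y\<in>{0..a}.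
                 \<bar>GG \<gamma> g k x - GG \<gamma> g k y\<bar> \<le> L * \<bar>x - y\<bar>)"

lemma Lc: assumes "a \<ge> 0"
  shows "Lc a \<ge> 0" "k \<ge> 1 \<Longrightarrow> x \<in> {0..a} \<Longrightarrow> y \<in> {0..a} \<Longrightarrow>
     \<bar>GG \<gamma> g k x - GG \<gamma> g k y\<bar> \<le> Lc a * \<bar>x - y\<bar>"
proof -
  show "Lc a \<ge> 0" by (simp add: Lc_def)
  assume k: "k \<ge> 1" and xy: "x \<in> {0..a}" "y \<in> {0..a}"
  let ?P = "\<lambda>L. \<forall>k\<ge>1. \<forall>x\<in>{0..a}. \<forall>y\<in>{0..a}. \<bar>GG \<gamma> g k x - GG \<gamma> g k y\<bar> \<le> L * \<bar>x - y\<bar>"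
  have "?P (SOME L. ?P L)" using someI_ex[OF lip[OF assms]] .
  then have "\<bar>GG \<gamma> g k x - GG \<gamma> g k y\<bar> \<le> (SOME L. ?P L) * \<bar>x - y\<bar>" using k xy by blast
  also have "\<dots> \<le> Lc a * \<bar>x - y\<bar>" unfolding Lc_def by (intro mult_right_mono) auto
  finally show "\<bar>GG \<gamma> g k x - GG \<gamma> g k y\<bar> \<le> Lc a * \<bar>x - y\<bar>" .
qed

definition "cc = exp 1 * Lc 1"
definition "Bd a = a * exp (2 * exp 1 * cc * a)"
definition "LBd a = Lc (Bd a)"
definition "ee a k = 2 * (exp 1 * LBd a * Bd a)^2 / (real k * \<gamma> k ^ 2)
                      + LBd a * Bd a * (exp (Bd a / real k) - 1) / \<gamma> k"
definition "rho a k = a * \<gamma> k * ee a k + LBd a * Bd a / \<gamma> k"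
definition "good a k \<longleftrightarrow> k \<ge> 1 \<and> Bd a \<le> real k \<and> exp 1 * LBd a * Bd a / (real k * \<gamma> k) \<le> 1/2"

lemma cc_nonneg: "cc \<ge> 0" using Lc(1)[of 1] by (simp add: cc_def)

lemma Bd: "a \<ge> 0 \<Longrightarrow> Bd a \<ge> a" 
  unfolding Bd_def using cc_nonneg by (simp add: mult_le_cancel_left1)

lemma LBd: "LBd a \<ge> 0" by (simp add: LBd_def Lc_def)

lemma lower: "k \<ge> 1 \<Longrightarrow> z \<ge> 0 \<Longrightarrow> GG \<gamma> g k z \<ge> - cc * z"
  unfolding cc_def
  by (rule G_lower[OF pgf _ gamma_pos Lc(1)]) (use Lc(2)[of 1] in auto)

lemma G_bound: assumes "a \<ge> 0" "k \<ge> 1" "x \<in> {0..Bd a}"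
  shows "\<bar>GG \<gamma> g k x\<bar> \<le> LBd a * x"
  using Lc(2)[of "Bd a" k x 0] assms Bd[of a] GG_zero[of g k \<gamma>, OF pgf] by (auto simp: LBd_def)

end



lemma pow_le_exp: "x \<ge> 0 \<Longrightarrow> (1 + x) ^ j \<le> exp (x * real j)"
proof -
  assume x: "x \<ge> 0"
  have "(1 + x) ^ j \<le> exp x ^ j" using x by (intro power_mono) (auto simp: exp_ge_add_one_self)
  also have "\<dots> = exp (x * real j)" by (metis exp_of_nat_mult mult.commute)
  finally show ?thesis .
qed

context setting begin

lemma good_k: "good a k \<Longrightarrow> k \<ge> 1" by (simp add: good_def)

lemma vv_integrable:
  assumes "k \<ge> 1" "l \<ge> 0" "t \<ge> 0"
  shows "(\<lambda>s. vv \<gamma> g k s l) integrable_on {0..t}"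
proof -
  have "(\<lambda>s. vv \<gamma> g k s l) = (\<lambda>s. (stp g k ^^ nat \<lfloor>\<gamma> k * s\<rfloor>) l)"
    using vv_iter[OF pgf assms(1,2)] by auto
  then show ?thesis using step_integral[OF gamma_pos assms(3), of "\<lambda>j. (stp g k ^^ j) l"] by auto
qed

lemma rep:
  assumes a: "a \<ge> 0" and gk: "good a k" and l: "l \<in> {0..a}"
  shows "\<And>s. s \<in> {0..a} \<Longrightarrow> 0 \<le> vv \<gamma> g k s l \<and> vv \<gamma> g k s l \<le> Bd a"
    and "\<And>t. t \<in> {0..a} \<Longrightarrow> \<exists>I. ((\<lambda>s. GG \<gamma> g k (vv \<gamma> g k s l)) has_integral I) {0..t} \<and>
                 \<bar>vv \<gamma> g k t l - (l - I)\<bar> \<le> rho a k"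
proof -
  have k: "k \<ge> 1" using gk by (simp add: good_def)
  have l0: "l \<ge> 0" using l by simp
  define u where "u j = (stp g k ^^ j) l" for j
  define C where "C = 2 * exp 1 * cc"
  define B where "B = Bd a"
  define LB where "LB = LBd a"
  define G where "G = GG \<gamma> g k"
  have gp: "\<gamma> k > 0" by (rule gamma_pos)
  have C0: "C \<ge> 0" using cc_nonneg by (simp add: C_def)
  have vvu: "vv \<gamma> g k s l = u (nat \<lfloor>\<gamma> k * s\<rfloor>)" for s
    using vv_iter[OF pgf k l0] by (simp add: u_def)
  have u0: "u j \<ge> 0" for j using iter_rel[of g k l j, OF pgf k l0] by (simp add: u_def)
  have lipB: "\<forall>x\<in>{0..B}. \<bar>G x\<bar> \<le> LB * x" using G_bound[OF a k] by (simp add: B_def LB_def G_def)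
  have low: "\<forall>z\<ge>0. G z \<ge> - cc * z" using lower[OF k] by (simp add: G_def)
  have kB: "B \<le> real k" and small: "exp 1 * LB * B / (real k * \<gamma> k) \<le> 1/2"
    using gk by (auto simp: good_def B_def LB_def)
  note est = step_est[where g=g and k=k and \<gamma>=\<gamma> and LB="LBd a" and c=cc and B="Bd a", OF pgf k gp LBd cc_nonneg, folded G_def B_def LB_def, OF lipB low kB small]
  have apr: "real j \<le> \<gamma> k * a \<Longrightarrow> u j \<le> a * (1 + C / \<gamma> k) ^ j" for j
  proof (induction j)
    case 0 then show ?case using l by (simp add: u_def)
  next
    case (Suc j)
    then have j: "real j \<le> \<gamma> k * a" by simp
    have uj: "u j \<le> a * (1 + C / \<gamma> k) ^ j" using Suc j by simp
    have "a * (1 + C / \<gamma> k) ^ j \<le> a * exp (C / \<gamma> k * real j)"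
      using pow_le_exp[of "C / \<gamma> k" j] C0 gp a by (simp add: mult_left_mono)
    also have "C / \<gamma> k * real j \<le> C * a"
    proof -
      have "real j / \<gamma> k \<le> a" using j gp by (simp add: divide_le_eq mult.commute)
      then have "C * (real j / \<gamma> k) \<le> C * a" using C0 by (rule mult_left_mono)
      then show ?thesis by simp
    qed
    then have "a * exp (C / \<gamma> k * real j) \<le> a * exp (C * a)" using a by (simp add: mult_left_mono)
    finally have ujB: "u j \<le> B" using uj by (simp add: B_def Bd_def C_def mult.assoc)
    have "u (Suc j) = stp g k (u j)" by (simp add: u_def)
    also have "\<dots> \<le> u j + 2 * exp 1 * cc * u j / \<gamma> k" using est(2)[OF u0 ujB] .
    also have "\<dots> = u j * (1 + C / \<gamma> k)" by (simp add: C_def algebra_simps)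
    also have "\<dots> \<le> a * (1 + C / \<gamma> k) ^ j * (1 + C / \<gamma> k)"
      using uj C0 gp by (intro mult_right_mono) auto
    finally show ?case by (simp add: mult.commute mult.left_commute)
  qed
  have uB: "real j \<le> \<gamma> k * a \<Longrightarrow> u j \<le> B" for j
  proof -
    assume j: "real j \<le> \<gamma> k * a"
    have "a * (1 + C / \<gamma> k) ^ j \<le> a * exp (C / \<gamma> k * real j)"
      using pow_le_exp[of "C / \<gamma> k" j] C0 gp a by (simp add: mult_left_mono)
    also have "C / \<gamma> k * real j \<le> C * a"
    proof -
      have "real j / \<gamma> k \<le> a" using j gp by (simp add: divide_le_eq mult.commute)
      then have "C * (real j / \<gamma> k) \<le> C * a" using C0 by (rule mult_left_mono)
      then show ?thesis by simp
    qed
    then have "a * exp (C / \<gamma> k * real j) \<le> a * exp (C * a)" using a by (simp add: mult_left_mono)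
    finally show ?thesis using apr[OF j] by (simp add: B_def Bd_def C_def mult.assoc)
  qed
  have nbound: "real (nat \<lfloor>\<gamma> k * s\<rfloor>) \<le> \<gamma> k * a" if s: "s \<in> {0..a}" for s
  proof -
    have "\<lfloor>\<gamma> k * s\<rfloor> \<ge> 0" using s gp by simp
    then have "real (nat \<lfloor>\<gamma> k * s\<rfloor>) \<le> \<gamma> k * s" by simp
    also have "\<dots> \<le> \<gamma> k * a" using s gp by (simp add: mult_left_mono)
    finally show ?thesis .
  qed
  show "\<And>s. s \<in> {0..a} \<Longrightarrow> 0 \<le> vv \<gamma> g k s l \<and> vv \<gamma> g k s l \<le> Bd a"
    using vvu u0 uB nbound by (simp add: B_def)
  have e0: "ee a k \<ge> 0"
  proof -
    have "exp (Bd a / real k) \<ge> 1" using Bd[OF a] a k by simp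
    then show ?thesis unfolding ee_def using LBd Bd[OF a] a gp by (auto intro!: add_nonneg_nonneg)
  qed
  have disc: "real n \<le> \<gamma> k * a \<Longrightarrow> \<bar>u n - (l - (\<Sum>j<n. G (u j) / \<gamma> k))\<bar> \<le> real n * ee a k" for n
  proof (induction n)
    case 0 then show ?case by (simp add: u_def)
  next
    case (Suc n)
    then have n: "real n \<le> \<gamma> k * a" by simp
    have e: "\<bar>u (Suc n) - u n + G (u n) / \<gamma> k\<bar> \<le> ee a k"
      using est(1)[OF u0 uB[OF n]] by (simp add: u_def ee_def B_def LB_def G_def)
    have "u (Suc n) - (l - (\<Sum>j<Suc n. G (u j) / \<gamma> k))
        = (u n - (l - (\<Sum>j<n. G (u j) / \<gamma> k))) + (u (Suc n) - u n + G (u n) / \<gamma> k)"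
      by simp
    then show ?case using Suc.IH[OF n] e by (simp add: algebra_simps)
  qed
  show "\<And>t. t \<in> {0..a} \<Longrightarrow> \<exists>I. ((\<lambda>s. GG \<gamma> g k (vv \<gamma> g k s l)) has_integral I) {0..t} \<and>
                 \<bar>vv \<gamma> g k t l - (l - I)\<bar> \<le> rho a k"
  proof -
    fix t assume t: "t \<in> {0..a}"
    define n where "n = nat \<lfloor>\<gamma> k * t\<rfloor>"
    define I where "I = (\<Sum>j<n. G (u j)) / \<gamma> k + (t - real n / \<gamma> k) * G (u n)"
    have fl: "\<lfloor>\<gamma> k * t\<rfloor> \<ge> 0" using t gp by simp
    have n1: "real n \<le> \<gamma> k * t" using fl by (simp add: n_def)
    have n2: "\<gamma> k * t < real n + 1" using fl by (simp add: n_def)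
    have na: "real n \<le> \<gamma> k * a" using nbound[OF t] by (simp add: n_def)
    have hi: "((\<lambda>s. GG \<gamma> g k (vv \<gamma> g k s l)) has_integral I) {0..t}"
      using step_integral[OF gp, of t "\<lambda>j. G (u j)"] t unfolding vvu I_def n_def G_def by simp
    have tn0: "0 \<le> t - real n / \<gamma> k" using n1 gp by (simp add: field_simps)
    have "t < (real n + 1) / \<gamma> k" using n2 gp by (simp add: pos_less_divide_eq mult.commute)
    then have tn1: "t - real n / \<gamma> k \<le> 1 / \<gamma> k" by (simp add: add_divide_distrib)
    have Gn: "\<bar>G (u n)\<bar> \<le> LB * B"
    proof -
      have "\<bar>G (u n)\<bar> \<le> LB * u n" using lipB u0 uB[OF na] by auto
      also have "\<dots> \<le> LB * B" using uB[OF na] LBd by (simp add: LB_def mult_left_mono)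
      finally show ?thesis .
    qed
    have "vv \<gamma> g k t l - (l - I) = (u n - (l - (\<Sum>j<n. G (u j) / \<gamma> k))) + (t - real n / \<gamma> k) * G (u n)"
      by (simp add: vvu I_def n_def[symmetric] sum_divide_distrib)
    also have "\<bar>\<dots>\<bar> \<le> real n * ee a k + (1 / \<gamma> k) * (LB * B)"
    proof -
      have "\<bar>(t - real n / \<gamma> k) * G (u n)\<bar> \<le> (1 / \<gamma> k) * (LB * B)"
        unfolding abs_mult using tn0 tn1 Gn gp by (intro mult_mono) auto
      then show ?thesis using disc[OF na] by (smt (verit) abs_triangle_ineq)
    qed
    also have "\<dots> \<le> rho a k"
    proof -
      have "real n * ee a k \<le> \<gamma> k * a * ee a k" using na e0 by (rule mult_right_mono)
      then show ?thesis by (simp add: rho_def LB_def B_def mult.commute mult.left_commute)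
    qed
    finally show "\<exists>I. ((\<lambda>s. GG \<gamma> g k (vv \<gamma> g k s l)) has_integral I) {0..t} \<and>
                 \<bar>vv \<gamma> g k t l - (l - I)\<bar> \<le> rho a k" using hi by blast
  qed
qed

end



context setting begin

lemma good_ev: assumes a: "a \<ge> 0" shows "eventually (good a) sequentially"
proof -
  define X where "X = exp 1 * LBd a * Bd a"
  have X0: "X \<ge> 0" using LBd Bd[OF a] a unfolding X_def by simp
  have e1: "eventually (\<lambda>k. k \<ge> nat \<lceil>Bd a\<rceil> + 1) sequentially" by (rule eventually_ge_at_top)
  have e2: "eventually (\<lambda>k. 2 * X + 1 \<le> \<gamma> k) sequentially"
    using gamma_lim unfolding filterlim_at_top by blast
  show ?thesis using e1 e2
  proof eventually_elim
    case (elim k)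
    have k1: "k \<ge> 1" using elim by simp
    have kB: "Bd a \<le> real k"
    proof -
      have "Bd a \<le> real (nat \<lceil>Bd a\<rceil>)" by (rule real_nat_ceiling_ge)
      also have "nat \<lceil>Bd a\<rceil> \<le> k" using elim by linarith
      then have "real (nat \<lceil>Bd a\<rceil>) \<le> real k" by (simp only: of_nat_le_iff)
      finally show ?thesis .
    qed
    have gp: "\<gamma> k > 0" by (rule gamma_pos)
    have "X / (real k * \<gamma> k) \<le> X / \<gamma> k"
      using k1 gp X0 by (intro divide_left_mono) (auto simp: mult_le_cancel_right1)
    also have "X / \<gamma> k \<le> 1/2" using elim gp X0 by (simp add: divide_le_eq)
    finally show ?case using k1 kB by (simp add: good_def X_def)
  qed
qed

lemma rho_lim: "rho a \<longlonglongrightarrow> 0"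
proof -
  define X where "X = exp 1 * LBd a * Bd a"
  have eq: "rho a k = a * (2 * X^2 * inverse (real k * \<gamma> k)) + a * (LBd a * Bd a) * (exp (Bd a / real k) - 1)
            + LBd a * Bd a * inverse (\<gamma> k)" for k
    using gamma_pos[of k] unfolding rho_def ee_def X_def
    by (simp add: field_simps power2_eq_square)
  have i1: "(\<lambda>k. inverse (real k * \<gamma> k)) \<longlonglongrightarrow> 0"
    by (rule tendsto_inverse_0_at_top[OF filterlim_at_top_mult_at_top[OF filterlim_real_sequentially gamma_lim]])
  have i2: "(\<lambda>k. inverse (\<gamma> k)) \<longlonglongrightarrow> 0" by (rule tendsto_inverse_0_at_top[OF gamma_lim])
  have i3: "(\<lambda>k. exp (Bd a / real k)) \<longlonglongrightarrow> exp 0"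
    by (intro tendsto_intros lim_const_over_n)
  have "(\<lambda>k. a * (2 * X^2 * inverse (real k * \<gamma> k)) + a * (LBd a * Bd a) * (exp (Bd a / real k) - 1)
            + LBd a * Bd a * inverse (\<gamma> k)) \<longlonglongrightarrow> a * (2 * X^2 * 0) + a * (LBd a * Bd a) * (exp 0 - 1) + LBd a * Bd a * 0"
    by (intro tendsto_intros i1 i2 i3)
  then show ?thesis unfolding eq by simp
qed

end



context setting begin

lemma GG_lip: "a \<ge> 0 \<Longrightarrow> k \<ge> 1 \<Longrightarrow> x \<in> {0..Bd a} \<Longrightarrow> y \<in> {0..Bd a} \<Longrightarrow>
   \<bar>GG \<gamma> g k x - GG \<gamma> g k y\<bar> \<le> LBd a * \<bar>x - y\<bar>"
  using Lc(2)[of "Bd a" k x y] Bd[of a] by (simp add: LBd_def)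

lemma diff_integrable:
  assumes "m \<ge> 1" "n \<ge> 1" "l \<ge> 0" "t \<ge> 0" and bnd: "\<And>s. s \<in> {0..t} \<Longrightarrow> \<bar>vv \<gamma> g m s l - vv \<gamma> g n s l\<bar> \<le> M"
  shows "(\<lambda>s. \<bar>vv \<gamma> g m s l - vv \<gamma> g n s l\<bar>) integrable_on {0..t}"
proof (rule measurable_bounded_by_integrable_imp_integrable)
  have "(\<lambda>s. vv \<gamma> g m s l) \<in> borel_measurable (lebesgue_on {0..t})"
    by (rule integrable_imp_measurable[OF vv_integrable[OF assms(1,3,4)]])
  moreover have "(\<lambda>s. vv \<gamma> g n s l) \<in> borel_measurable (lebesgue_on {0..t})"
    by (rule integrable_imp_measurable[OF vv_integrable[OF assms(2,3,4)]])
  ultimately show "(\<lambda>s. \<bar>vv \<gamma> g m s l - vv \<gamma> g n s l\<bar>) \<in> borel_measurable (lebesgue_on {0..t})"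
    by measurable
  show "(\<lambda>s. M) integrable_on {0..t}" by (rule integrable_const_ivl)
  show "\<And>x. x \<in> {0..t} \<Longrightarrow> norm \<bar>vv \<gamma> g m x l - vv \<gamma> g n x l\<bar> \<le> M" using bnd by simp
  show "{0..t} \<in> sets lebesgue" by simp
qed

lemma cauchy:
  assumes a: "a \<ge> 0" and eps: "\<epsilon> > 0"
  shows "\<exists>N. \<forall>m n x. N \<le> m \<and> N \<le> n \<and> x \<in> {0..a} \<times> {0..a} \<longrightarrow>
            dist ((\<lambda>(t, l). vv \<gamma> g m t l) x) ((\<lambda>(t, l). vv \<gamma> g n t l) x) < \<epsilon>"
proof -
  define B where "B = Bd a"
  define LB where "LB = LBd a"
  define \<Lambda> where "\<Lambda> = exp (LB * a)"
  define \<eta> where "\<eta> = \<epsilon> / (4 * (a + 1) * \<Lambda>)"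
  have Lp: "\<Lambda> > 0" by (simp add: \<Lambda>_def)
  have LB0: "LB \<ge> 0" using LBd by (simp add: LB_def)
  have B0: "B \<ge> 0" using Bd[OF a] a by (simp add: B_def)
  have etap: "\<eta> > 0" using eps Lp a by (simp add: \<eta>_def)
  define \<delta> where "\<delta> = 2 * \<eta> + 2 * \<eta> * a"
  have dL: "\<delta> * \<Lambda> < \<epsilon>"
  proof -
    have h1: "\<eta> * (4 * (a + 1) * \<Lambda>) = \<epsilon>" using Lp a by (simp add: \<eta>_def)
    have "\<delta> * \<Lambda> = (\<eta> * (4 * (a + 1) * \<Lambda>)) / 2" by (simp add: \<delta>_def algebra_simps)
    then have "\<delta> * \<Lambda> = \<epsilon> / 2" by (simp only: h1)
    then show ?thesis using eps by simp
  qed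
  have ev: "eventually (\<lambda>k. good a k \<and> rho a k \<le> \<eta> \<and> (\<forall>x\<in>{0..B}. dist (GG \<gamma> g k x) (\<phi> x) < \<eta>)) sequentially"
  proof -
    have "eventually (\<lambda>k. dist (rho a k) 0 < \<eta>) sequentially"
      using rho_lim etap by (rule tendstoD)
    moreover have "eventually (\<lambda>k. \<forall>x\<in>{0..B}. dist (GG \<gamma> g k x) (\<phi> x) < \<eta>) sequentially"
      using uniform_limitD[OF conv[of B] etap] B0 by simp
    ultimately show ?thesis using good_ev[OF a]
      by eventually_elim (auto simp: dist_real_def)
  qed
  then obtain N where N: "\<And>k. k \<ge> N \<Longrightarrow> good a k \<and> rho a k \<le> \<eta> \<and> (\<forall>x\<in>{0..B}. dist (GG \<gamma> g k x) (\<phi> x) < \<eta>)"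
    unfolding eventually_sequentially by blast
  have main: "\<bar>vv \<gamma> g m t l - vv \<gamma> g n t l\<bar> \<le> \<delta> * \<Lambda>"
    if m: "m \<ge> N" and n: "n \<ge> N" and t: "t \<in> {0..a}" and l: "l \<in> {0..a}" for m n t l
  proof -
    have gm: "good a m" and gn: "good a n" using N m n by auto
    have m1: "m \<ge> 1" and n1: "n \<ge> 1" using gm gn good_k by auto
    have l0: "l \<ge> 0" using l by simp
    define f where "f s = \<bar>vv \<gamma> g m s l - vv \<gamma> g n s l\<bar>" for s
    have wm: "s \<in> {0..a} \<Longrightarrow> vv \<gamma> g m s l \<in> {0..B}" for s using rep(1)[OF a gm l] by (auto simp: B_def)
    have wn: "s \<in> {0..a} \<Longrightarrow> vv \<gamma> g n s l \<in> {0..B}" for s using rep(1)[OF a gn l] by (auto simp: B_def)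
    have fb: "s \<in> {0..a} \<Longrightarrow> 0 \<le> f s \<and> f s \<le> B" for s
      using wm[of s] wn[of s] by (auto simp: f_def)
    have fint: "t' \<in> {0..a} \<Longrightarrow> f integrable_on {0..t'}" for t'
      unfolding f_def
      by (rule diff_integrable[OF m1 n1 l0, of t' B]) (use fb[unfolded f_def] in auto)
    have ineq: "f t' \<le> \<delta> + LB * integral {0..t'} f" if t': "t' \<in> {0..a}" for t'
    proof -
      obtain Im where Im: "((\<lambda>s. GG \<gamma> g m (vv \<gamma> g m s l)) has_integral Im) {0..t'}"
        "\<bar>vv \<gamma> g m t' l - (l - Im)\<bar> \<le> rho a m" using rep(2)[OF a gm l t'] by blast
      obtain In where In: "((\<lambda>s. GG \<gamma> g n (vv \<gamma> g n s l)) has_integral In) {0..t'}"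
        "\<bar>vv \<gamma> g n t' l - (l - In)\<bar> \<le> rho a n" using rep(2)[OF a gn l t'] by blast
      define D where "D s = GG \<gamma> g n (vv \<gamma> g n s l) - GG \<gamma> g m (vv \<gamma> g m s l)" for s
      have Dint: "(D has_integral (In - Im)) {0..t'}"
        unfolding D_def by (rule has_integral_diff[OF In(1) Im(1)])
      have Db: "norm (D s) \<le> LB * f s + 2 * \<eta>" if s: "s \<in> {0..t'}" for s
      proof -
        have sa: "s \<in> {0..a}" using s t' by auto
        have "\<bar>GG \<gamma> g n (vv \<gamma> g n s l) - GG \<gamma> g n (vv \<gamma> g m s l)\<bar> \<le> LB * f s"
          using GG_lip[OF a n1 wn[OF sa, unfolded B_def] wm[OF sa, unfolded B_def]]
          by (simp add: f_def LB_def abs_minus_commute)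
        moreover have "\<bar>GG \<gamma> g n (vv \<gamma> g m s l) - \<phi> (vv \<gamma> g m s l)\<bar> < \<eta>"
          using N[OF n] wm[OF sa] by (auto simp: dist_real_def)
        moreover have "\<bar>GG \<gamma> g m (vv \<gamma> g m s l) - \<phi> (vv \<gamma> g m s l)\<bar> < \<eta>"
          using N[OF m] wm[OF sa] by (auto simp: dist_real_def)
        ultimately show ?thesis unfolding D_def real_norm_def by linarith
      qed
      have bint: "(\<lambda>s. LB * f s + 2 * \<eta>) integrable_on {0..t'}"
        using integrable_add[OF integrable_on_cmult_left[OF fint[OF t'], of LB] integrable_const_ivl[of "2 * \<eta>" 0 t']]
        by simp
      have "\<bar>In - Im\<bar> = norm (integral {0..t'} D)" using Dint by (simp add: integral_unique)
      also have "\<dots> \<le> integral {0..t'} (\<lambda>s. LB * f s + 2 * \<eta>)"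
        by (rule integral_norm_bound_integral[OF has_integral_integrable[OF Dint] bint Db])
      also have "\<dots> = LB * integral {0..t'} f + 2 * \<eta> * t'"
        using integral_add[OF integrable_on_cmult_left[OF fint[OF t'], of LB] integrable_const_ivl[of "2 * \<eta>" 0 t']] t'
        by simp
      also have "\<dots> \<le> LB * integral {0..t'} f + 2 * \<eta> * a"
        using t' etap by (simp add: mult_left_mono)
      finally have "\<bar>In - Im\<bar> \<le> LB * integral {0..t'} f + 2 * \<eta> * a" .
      moreover have "rho a m \<le> \<eta>" "rho a n \<le> \<eta>" using N m n by auto
      ultimately show ?thesis using Im(2) In(2) unfolding f_def \<delta>_def by linarith
    qed
    have "f t \<le> \<delta> * exp (LB * t)"
      by (rule gronwall[OF a LB0 _ fint fb ineq t]) (use etap a in \<open>simp add: \<delta>_def\<close>)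
    also have "\<dots> \<le> \<delta> * \<Lambda>"
      using t LB0 etap a unfolding \<Lambda>_def \<delta>_def by (intro mult_left_mono) (auto intro: mult_left_mono)
    finally show ?thesis by (simp add: f_def)
  qed
  show ?thesis
  proof (intro exI allI impI)
    fix m n x assume h: "N \<le> m \<and> N \<le> n \<and> x \<in> {0..a} \<times> {0..a}"
    obtain t l where x: "x = (t, l)" by fastforce
    show "dist ((\<lambda>(t, l). vv \<gamma> g m t l) x) ((\<lambda>(t, l). vv \<gamma> g n t l) x) < \<epsilon>"
      using main[of m n t l] h dL unfolding x by (auto simp: dist_real_def)
  qed
qed

end



context setting begin

definition "vlim t l = lim (\<lambda>k. vv \<gamma> g k t l)"

lemma unif:
  assumes a: "a \<ge> 0"
  shows "uniform_limit ({0..a} \<times> {0..a}) (\<lambda>k (t, l). vv \<gamma> g k t l) (\<lambda>(t, l). vlim t l) sequentially"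
proof -
  let ?s = "\<lambda>k (t, l). vv \<gamma> g k t l"
  let ?S = "{0..a} \<times> {0..a}"
  have "\<forall>e>0. \<exists>N. \<forall>m n x. N \<le> m \<and> N \<le> n \<and> x \<in> ?S \<longrightarrow> dist (?s m x) (?s n x) < e"
    using cauchy[OF a] by blast
  then obtain h where h: "\<forall>e>0. \<exists>N. \<forall>n x. N \<le> n \<and> x \<in> ?S \<longrightarrow> dist (?s n x) (h x) < e"
    using uniformly_convergent_eq_cauchy[of "\<lambda>x. x \<in> ?S" ?s] by blast
  have hx: "h x = (\<lambda>(t, l). vlim t l) x" if x: "x \<in> ?S" for x
  proof -
    have "(\<lambda>n. ?s n x) \<longlonglongrightarrow> h x"
      unfolding lim_sequentially using h x by blast
    then have "lim (\<lambda>n. ?s n x) = h x" by (rule limI)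
    then show ?thesis by (cases x) (simp add: vlim_def)
  qed
  show ?thesis unfolding uniform_limit_iff
  proof (intro allI impI)
    fix e :: real assume e: "e > 0"
    obtain N where N: "\<forall>n x. N \<le> n \<and> x \<in> ?S \<longrightarrow> dist (?s n x) (h x) < e" using h e by blast
    show "\<forall>\<^sub>F n in sequentially. \<forall>x\<in>?S. dist (?s n x) ((\<lambda>(t, l). vlim t l) x) < e"
      unfolding eventually_sequentially using N hx by metis
  qed
qed

lemma conv_pt: "a \<ge> 0 \<Longrightarrow> t \<in> {0..a} \<Longrightarrow> l \<in> {0..a} \<Longrightarrow> (\<lambda>k. vv \<gamma> g k t l) \<longlonglongrightarrow> vlim t l"
  using tendsto_uniform_limitI[OF unif, of a "(t, l)"] by simp

lemma phi_pt: "x \<ge> 0 \<Longrightarrow> (\<lambda>k. GG \<gamma> g k x) \<longlonglongrightarrow> \<phi> x"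
  using tendsto_uniform_limitI[OF conv[of x], of x] by simp

lemma phi_lip: assumes a: "a \<ge> 0" and x: "x \<in> {0..Bd a}" and y: "y \<in> {0..Bd a}"
  shows "\<bar>\<phi> x - \<phi> y\<bar> \<le> LBd a * \<bar>x - y\<bar>"
proof -
  have "(\<lambda>k. \<bar>GG \<gamma> g k x - GG \<gamma> g k y\<bar>) \<longlonglongrightarrow> \<bar>\<phi> x - \<phi> y\<bar>"
    using x y by (intro tendsto_intros phi_pt) auto
  moreover have "\<exists>N. \<forall>n\<ge>N. \<bar>GG \<gamma> g n x - GG \<gamma> g n y\<bar> \<le> LBd a * \<bar>x - y\<bar>"
    using GG_lip[OF a _ x y] by (intro exI[of _ 1]) auto
  ultimately show ?thesis by (rule LIMSEQ_le_const2)
qed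

lemma phi0: "\<phi> 0 = 0"
proof -
  have "(\<lambda>k. GG \<gamma> g k 0) \<longlonglongrightarrow> 0" using GG_zero[of g _ \<gamma>, OF pgf] by simp
  then show ?thesis using phi_pt[of 0] LIMSEQ_unique by blast
qed

lemma eqn:
  assumes t: "t \<ge> 0" and l: "l \<ge> 0"
  shows "(\<lambda>s. \<phi> (vlim s l)) integrable_on {0..t} \<and> vlim t l = l - integral {0..t} (\<lambda>s. \<phi> (vlim s l))"
proof -
  define a where "a = max t l"
  have a: "a \<ge> 0" using t by (simp add: a_def)
  have ta: "t \<in> {0..a}" and la: "l \<in> {0..a}" using t l by (auto simp: a_def)
  define B where "B = Bd a"
  define LB where "LB = LBd a"
  have LB0: "LB \<ge> 0" using LBd by (simp add: LB_def)
  have B0: "B \<ge> 0" using Bd[OF a] a by (simp add: B_def)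
  obtain N0 where N0: "\<And>k. k \<ge> N0 \<Longrightarrow> good a k" using good_ev[OF a] unfolding eventually_sequentially by blast
  have vB: "vlim s l \<in> {0..B}" if s: "s \<in> {0..a}" for s
  proof -
    have c: "(\<lambda>k. vv \<gamma> g k s l) \<longlonglongrightarrow> vlim s l" by (rule conv_pt[OF a s la])
    have "\<forall>k\<ge>N0. 0 \<le> vv \<gamma> g k s l \<and> vv \<gamma> g k s l \<le> B" using rep(1)[OF a N0 la s] by (simp add: B_def)
    then have "vlim s l \<ge> 0" "vlim s l \<le> B"
      using LIMSEQ_le_const[OF c] LIMSEQ_le_const2[OF c] by blast+
    then show ?thesis by simp
  qed
  have wB: "vv \<gamma> g k s l \<in> {0..B}" if "k \<ge> N0" "s \<in> {0..a}" for k s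
    using rep(1)[OF a N0[OF that(1)] la that(2)] by (simp add: B_def)
  have phib: "\<bar>\<phi> (vlim s l)\<bar> \<le> LB * B" if s: "s \<in> {0..a}" for s
  proof -
    have "\<bar>\<phi> (vlim s l) - \<phi> 0\<bar> \<le> LB * \<bar>vlim s l - 0\<bar>"
      using phi_lip[OF a, of "vlim s l" 0] vB[OF s] B0 by (simp add: B_def LB_def)
    also have "\<dots> \<le> LB * B" using vB[OF s] LB0 by (simp add: mult_left_mono)
    finally show ?thesis by (simp add: phi0)
  qed
  have close: "eventually (\<lambda>k. \<forall>s\<in>{0..a}. \<bar>GG \<gamma> g k (vv \<gamma> g k s l) - \<phi> (vlim s l)\<bar> < e) sequentially"
    if e: "e > 0" for e
  proof -
    have e2: "e / 2 > 0" using e by simp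
    have e3: "e / (2 * (LB + 1)) > 0" using e LB0 by simp
    have ev1: "eventually (\<lambda>k. \<forall>x\<in>{0..B}. dist (GG \<gamma> g k x) (\<phi> x) < e / 2) sequentially"
      using uniform_limitD[OF conv[OF B0] e2] .
    have ev2: "eventually (\<lambda>k. \<forall>x\<in>{0..a}\<times>{0..a}. dist ((\<lambda>(t, l). vv \<gamma> g k t l) x) ((\<lambda>(t, l). vlim t l) x) < e / (2 * (LB + 1))) sequentially"
      using uniform_limitD[OF unif[OF a] e3] .
    have ev3: "eventually (\<lambda>k. k \<ge> N0) sequentially" by (rule eventually_ge_at_top)
    show ?thesis using ev1 ev2 ev3
    proof eventually_elim
      case (elim k)
      show ?case
      proof
        fix s assume s: "s \<in> {0..a}"
        have w: "vv \<gamma> g k s l \<in> {0..B}" using wB[OF elim(3) s] .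
        have d1: "\<bar>GG \<gamma> g k (vv \<gamma> g k s l) - \<phi> (vv \<gamma> g k s l)\<bar> < e / 2"
          using elim(1) w by (auto simp: dist_real_def)
        have d2: "\<bar>vv \<gamma> g k s l - vlim s l\<bar> < e / (2 * (LB + 1))"
          using elim(2) s la by (auto simp: dist_real_def)
        have "\<bar>\<phi> (vv \<gamma> g k s l) - \<phi> (vlim s l)\<bar> \<le> LB * \<bar>vv \<gamma> g k s l - vlim s l\<bar>"
          using phi_lip[OF a] w vB[OF s] by (simp add: B_def LB_def)
        also have "\<dots> \<le> LB * (e / (2 * (LB + 1)))" using d2 LB0 by (intro mult_left_mono) auto
        also have "\<dots> \<le> e / 2"
        proof -
          have "LB * (e / (2 * (LB + 1))) = (e / 2) * (LB / (LB + 1))" by (simp add: field_simps)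
          also have "\<dots> \<le> (e / 2) * 1" using LB0 e by (intro mult_left_mono) auto
          finally show ?thesis by simp
        qed
        finally show "\<bar>GG \<gamma> g k (vv \<gamma> g k s l) - \<phi> (vlim s l)\<bar> < e" using d1 by linarith
      qed
    qed
  qed
  have ptw: "(\<lambda>k. GG \<gamma> g k (vv \<gamma> g k s l)) \<longlonglongrightarrow> \<phi> (vlim s l)" if s: "s \<in> {0..a}" for s
  proof (rule tendstoI)
    fix e :: real assume "e > 0"
    from close[OF this] show "\<forall>\<^sub>F k in sequentially. dist (GG \<gamma> g k (vv \<gamma> g k s l)) (\<phi> (vlim s l)) < e"
      by eventually_elim (use s in \<open>auto simp: dist_real_def\<close>)
  qed
  define J where "J k = integral {0..t} (\<lambda>s. GG \<gamma> g k (vv \<gamma> g k s l))" for k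
  have Jk: "((\<lambda>s. GG \<gamma> g k (vv \<gamma> g k s l)) has_integral J k) {0..t} \<and> \<bar>vv \<gamma> g k t l - (l - J k)\<bar> \<le> rho a k"
    if k: "k \<ge> N0" for k
  proof -
    obtain I where I: "((\<lambda>s. GG \<gamma> g k (vv \<gamma> g k s l)) has_integral I) {0..t}"
      "\<bar>vv \<gamma> g k t l - (l - I)\<bar> \<le> rho a k" using rep(2)[OF a N0[OF k] la ta] by blast
    then have "J k = I" by (simp add: J_def integral_unique)
    then show ?thesis using I by simp
  qed
  have meas: "(\<lambda>s. \<phi> (vlim s l)) \<in> borel_measurable (lebesgue_on {0..t})"
  proof (rule borel_measurable_LIMSEQ_real[where u = "\<lambda>i s. GG \<gamma> g (i + N0) (vv \<gamma> g (i + N0) s l)"])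
    fix s assume "s \<in> space (lebesgue_on {0..t})"
    then have s: "s \<in> {0..a}" using ta by auto
    show "(\<lambda>i. GG \<gamma> g (i + N0) (vv \<gamma> g (i + N0) s l)) \<longlonglongrightarrow> \<phi> (vlim s l)"
      using LIMSEQ_ignore_initial_segment[OF ptw[OF s], of N0] by simp
  next
    fix i
    show "(\<lambda>s. GG \<gamma> g (i + N0) (vv \<gamma> g (i + N0) s l)) \<in> borel_measurable (lebesgue_on {0..t})"
      using Jk[of "i + N0"] by (intro integrable_imp_measurable) auto
  qed
  have pint: "(\<lambda>s. \<phi> (vlim s l)) integrable_on {0..t}"
  proof (rule measurable_bounded_by_integrable_imp_integrable[OF meas])
    show "(\<lambda>s. LB * B) integrable_on {0..t}" by (rule integrable_const_ivl)
    show "\<And>s. s \<in> {0..t} \<Longrightarrow> norm (\<phi> (vlim s l)) \<le> LB * B" using phib ta by auto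
  qed simp
  define Jp where "Jp = integral {0..t} (\<lambda>s. \<phi> (vlim s l))"
  have Jlim: "J \<longlonglongrightarrow> Jp"
  proof (rule tendstoI)
    fix e :: real assume e: "e > 0"
    have e': "e / (t + 1) > 0" using e t by simp
    show "\<forall>\<^sub>F k in sequentially. dist (J k) Jp < e"
      using close[OF e'] eventually_ge_at_top[of N0]
    proof eventually_elim
      case (elim k)
      have ik: "(\<lambda>s. GG \<gamma> g k (vv \<gamma> g k s l)) integrable_on {0..t}" using Jk[OF elim(2)] by blast
      have "J k - Jp = integral {0..t} (\<lambda>s. GG \<gamma> g k (vv \<gamma> g k s l) - \<phi> (vlim s l))"
        unfolding J_def Jp_def by (rule integral_diff[OF ik pint, symmetric])
      then have "\<bar>J k - Jp\<bar> = norm (integral {0..t} (\<lambda>s. GG \<gamma> g k (vv \<gamma> g k s l) - \<phi> (vlim s l)))" by simp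
      also have "\<dots> \<le> integral {0..t} (\<lambda>s. e / (t + 1))"
      proof (rule integral_norm_bound_integral)
        show "(\<lambda>s. GG \<gamma> g k (vv \<gamma> g k s l) - \<phi> (vlim s l)) integrable_on {0..t}"
          by (rule integrable_diff[OF ik pint])
        show "(\<lambda>s. e / (t + 1)) integrable_on {0..t}" by (rule integrable_const_ivl)
        fix s assume "s \<in> {0..t}"
        then have "s \<in> {0..a}" using ta by auto
        then show "norm (GG \<gamma> g k (vv \<gamma> g k s l) - \<phi> (vlim s l)) \<le> e / (t + 1)"
          using elim(1) by fastforce
      qed
      also have "\<dots> = e / (t + 1) * t" using t by simp
      also have "\<dots> < e" using e t by (simp add: field_simps)
      finally show ?case by (simp add: dist_real_def)
    qed
  qed
  have r0: "(\<lambda>k. vv \<gamma> g k t l - (l - J k)) \<longlonglongrightarrow> 0"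
  proof (rule Lim_null_comparison[OF _ rho_lim])
    show "\<forall>\<^sub>F k in sequentially. norm (vv \<gamma> g k t l - (l - J k)) \<le> rho a k"
      using eventually_ge_at_top[of N0] by eventually_elim (use Jk in auto)
  qed
  have "(\<lambda>k. (vv \<gamma> g k t l - (l - J k)) + (l - J k)) \<longlonglongrightarrow> 0 + (l - Jp)"
    by (intro tendsto_intros r0 Jlim)
  then have "(\<lambda>k. vv \<gamma> g k t l) \<longlonglongrightarrow> l - Jp" by simp
  then have "vlim t l = l - Jp" using conv_pt[OF a ta la] LIMSEQ_unique by blast
  then show ?thesis using pint by (simp add: Jp_def)
qed

end

theorem theorem2p1p6:
  fixes \<gamma> :: "nat \<Rightarrow> real" and g :: "nat \<Rightarrow> real \<Rightarrow> real" and \<phi> :: "real \<Rightarrow> real"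
  assumes gamma_pos: "\<And>k. \<gamma> k > 0"
    and gamma_lim: "filterlim \<gamma> at_top sequentially"
    and pgf: "\<And>k. is_pgf (g k)"
    and lip: "\<And>a. a \<ge> 0 \<Longrightarrow> \<exists>L. \<forall>k\<ge>1. \<forall>x\<in>{0..a}. \<forall>y\<in>{0..a}.
                 \<bar>GG \<gamma> g k x - GG \<gamma> g k y\<bar> \<le> L * \<bar>x - y\<bar>"
    and conv: "\<And>a. a \<ge> 0 \<Longrightarrow> uniform_limit {0..a} (GG \<gamma> g) \<phi> sequentially"
  shows "\<exists>v :: real \<Rightarrow> real \<Rightarrow> real.
           (\<forall>a\<ge>0. uniform_limit ({0..a} \<times> {0..a}) (\<lambda>k (t, l). vv \<gamma> g k t l)
                      (\<lambda>(t, l). v t l) sequentially) \<and>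
           (\<forall>t\<ge>0. \<forall>l\<ge>0. (\<lambda>s. \<phi> (v s l)) integrable_on {0..t} \<and>
                      v t l = l - integral {0..t} (\<lambda>s. \<phi> (v s l)))"
proof -
  interpret S: setting \<gamma> g \<phi>
    by (unfold_locales) (use gamma_pos gamma_lim pgf lip conv in auto)
  show ?thesis
    by (rule exI[of _ S.vlim]) (use S.unif S.eqn in auto)
qed

end
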